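(* Let $0 \le q < p < 1$ and $s \in [0,1]$, and set $\alpha := p - q$ and $\rho := q/(1-\alpha)$. Consider the minimal random walk model: $\{X_i\}_{i\ge1}$ are $\{0,1\}$-valued with $P(X_1=1) = s$, and for each $n\ge1$, with $U_n$ uniform on $\{1,\dots,n\}$ (independent of everything else), if $X_{U_n}=1$ then $X_{n+1}=1$ with probability $p$ and $0$ otherwise, while if $X_{U_n}=0$ then $X_{n+1}=1$ with probability $q$ and $0$ otherwise. Let $H_n := \sum_{i=1}^n X_i$, and let $E_{p,q,s}$, $V_{p,q,s}$ denote expectation and variance for this model. Let $T_n$ be the random recursive tree on vertices $\{1,\dots,n\}$ (vertex $1$ alone initially; for $i=2,\dots,n$, vertex $i$ is joined to a uniformly chosen vertex among $\{1,\dots,i-1\}$), and perform Bernoulli bond percolation on $T_n$ in which each edge is retained independently with probability $\alpha$ and removed otherwise; denote expectation for this model by $E_\alpha$. Let $\mathcal{C}_{1,n}$ be the cluster containing vertex $1$, and let $\mathcal{C}_{1,n},\mathcal{C}_{2,n},\dots,\mathcal{C}_{n,n}$ be an enumeration of the clusters (setting $\mathcal{C}_{j,n} = \emptyset$ when $j$ exceeds the number of clusters). Then $$E_{p,q,s}[H_n] = \rho n + (s-\rho)\, E_\alpha[\#\mathcal{C}_{1,n}],$$ and $$V_{p,q,s}[H_n] = \rho(1-\rho)\sum_{j=1}^n E_\alpha[(\#\mathcal{C}_{j,n})^2] + (1-2\rho)(s-\rho)\, E_\alpha[(\#\mathcal{C}_{1,n})^2] - (s-\rho)^2\, (E_\a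lpha[\#\mathcal{C}_{1,n}])^2.$$
   Context: $\#\mathcal{C}$ denotes the number of vertices of a cluster $\mathcal{C}$. The enumeration of clusters other than $\mathcal{C}_{1,n}$ is arbitrary (e.g. by smallest vertex label); the formulas only involve $\mathcal{C}_{1,n}$ and sums over all clusters. *)

theory Defs
  imports "HOL-Probability.Probability"
begin

text \<open>Minimal random walk model: the list [X_1, ..., X_n] (0-indexed in the list).\<close>
fun mrw :: "real \<Rightarrow> real \<Rightarrow> real \<Rightarrow> nat \<Rightarrow> bool list pmf" where
  "mrw p q s 0 = return_pmf []"
| "mrw p q s (Suc 0) = map_pmf (\<lambda>b. [b]) (bernoulli_pmf s)"
| "mrw p q s (Suc (Suc m)) =
     do { xs \<leftarrow> mrw p q s (Suc m);
          u \<leftarrow> pmf_of_set {..<Suc m};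
          x \<leftarrow> bernoulli_pmf (if xs ! u then p else q);
          return_pmf (xs @ [x]) }"

definition H :: "bool list \<Rightarrow> real" where
  "H xs = real (count_list xs True)"

text \<open>Entry k of the list describes vertex k+2: (its parent in {1..k+1}, whether the edge
  to the parent is retained).\<close>
fun rrt_perc :: "real \<Rightarrow> nat \<Rightarrow> (nat \<times> bool) list pmf" where
  "rrt_perc a 0 = return_pmf []"
| "rrt_perc a (Suc 0) = return_pmf []"
| "rrt_perc a (Suc (Suc m)) =
     do { t \<leftarrow> rrt_perc a (Suc m);
          par \<leftarrow> pmf_of_set {1..Suc m};
          b \<leftarrow> bernoulli_pmf a;
          return_pmf (t @ [(par, b)]) }"

definition perc_adj :: "(nat \<times> bool) list \<Rightarrow> nat \<Rightarrow> nat \<Rightarrow> bool" where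
  "perc_adj t v w \<longleftrightarrow> (\<exists>k<length t. snd (t ! k) \<and>
      ((v = k + 2 \<and> w = fst (t ! k)) \<or> (w = k + 2 \<and> v = fst (t ! k))))"

definition cluster :: "(nat \<times> bool) list \<Rightarrow> nat \<Rightarrow> nat set" where
  "cluster t v = {w. (perc_adj t)\<^sup>*\<^sup>* v w}"

definition clusters :: "nat \<Rightarrow> (nat \<times> bool) list \<Rightarrow> nat set set" where
  "clusters n t = cluster t ` {1..n}"

end

theory Submission
  imports Defs
begin

lemma exp_fin:
  fixes f :: "'a \<Rightarrow> real"
  assumes "finite (set_pmf M)"
  shows "measure_pmf.expectation M f = (\<Sum>a\<in>set_pmf M. pmf M a * f a)"
  using assms by (subst integral_measure_pmf[of "set_pmf M"]) auto

lemma exp_bind: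
  fixes h :: "'b \<Rightarrow> real"
  assumes "finite (set_pmf M)" "\<And>x. x \<in> set_pmf M \<Longrightarrow> finite (set_pmf (N x))"
  shows "measure_pmf.expectation (M \<bind> N) h = measure_pmf.expectation M (\<lambda>x. measure_pmf.expectation (N x) h)"
proof -
  have "measure_pmf.expectation (M \<bind> N) h = (\<Sum>a\<in>set_pmf M. pmf M a *\<^sub>R measure_pmf.expectation (N a) h)"
    by (rule pmf_expectation_bind) (use assms in auto)
  also have "\<dots> = measure_pmf.expectation M (\<lambda>x. measure_pmf.expectation (N x) h)"
    by (simp add: exp_fin[OF assms(1)])
  finally show ?thesis .
qed

lemma exp_cong:
  fixes f g :: "'a \<Rightarrow> real"
  assumes "finite (set_pmf M)" "\<And>x. x \<in> set_pmf M \<Longrightarrow> f x = g x"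
  shows "measure_pmf.expectation M f = measure_pmf.expectation M g"
  using assms by (simp add: exp_fin)

lemma fin_bern: "finite (set_pmf (bernoulli_pmf a))"
  by (rule finite_subset[OF subset_UNIV]) simp

lemma set_pos1[simp]: "set_pmf (pmf_of_set {..<Suc m}) = {..<Suc m}"
  by (rule set_pmf_of_set) auto
lemma set_pos2[simp]: "set_pmf (pmf_of_set {1..Suc m}) = {1..Suc m}"
  by (rule set_pmf_of_set) auto

lemma fin_mrw: "finite (set_pmf (mrw p q s n))"
  by (induction p q s n rule: mrw.induct) (auto simp: set_bind_pmf fin_bern)

lemma fin_rrt: "finite (set_pmf (rrt_perc a n))"
  by (induction a n rule: rrt_perc.induct) (auto simp: set_bind_pmf fin_bern)

lemma len_mrw: "xs \<in> set_pmf (mrw p q s n) \<Longrightarrow> length xs = n"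
  by (induction p q s n arbitrary: xs rule: mrw.induct) (auto simp: set_bind_pmf)

lemma exp_bern_ret:
  fixes f :: "'a \<Rightarrow> real"
  assumes "0 \<le> r" "r \<le> 1"
  shows "measure_pmf.expectation (bernoulli_pmf r \<bind> (\<lambda>x. return_pmf (g x))) f = r * f (g True) + (1 - r) * f (g False)"
  using assms by (subst exp_bind) (simp_all add: fin_bern)

lemma exp_pos:
  fixes h :: "'a \<Rightarrow> real"
  assumes "finite A" "A \<noteq> {}" "\<And>x. x \<in> A \<Longrightarrow> finite (set_pmf (N x))"
  shows "measure_pmf.expectation (pmf_of_set A \<bind> N) h = (\<Sum>x\<in>A. measure_pmf.expectation (N x) h) / real (card A)"
  using assms by (subst exp_bind) (simp_all add: integral_pmf_of_set)

lemma mrw_step: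
  fixes f :: "bool list \<Rightarrow> real"
  assumes "0 \<le> p" "p \<le> 1" "0 \<le> q" "q \<le> 1"
  shows "measure_pmf.expectation (mrw p q s (Suc (Suc m))) f =
    measure_pmf.expectation (mrw p q s (Suc m)) (\<lambda>xs. (\<Sum>u<Suc m. (if xs!u then p else q) * f (xs @ [True])
        + (1 - (if xs!u then p else q)) * f (xs @ [False])) / real (Suc m))"
proof -
  have fin: "finite (set_pmf (pmf_of_set {..<Suc m} \<bind> (\<lambda>u. bernoulli_pmf (if xs ! u then p else q) \<bind> (\<lambda>x. return_pmf (xs @ [x])))))" for xs
    by (auto simp: set_bind_pmf intro!: finite_UN_I fin_bern)
  have inner: "measure_pmf.expectation (pmf_of_set {..<Suc m} \<bind> (\<lambda>u. bernoulli_pmf (if xs ! u then p else q) \<bind> (\<lambda>x. return_pmf (xs @ [x])))) f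
     = (\<Sum>u<Suc m. (if xs!u then p else q) * f (xs @ [True])
        + (1 - (if xs!u then p else q)) * f (xs @ [False])) / real (Suc m)" for xs
  proof -
    have "measure_pmf.expectation (pmf_of_set {..<Suc m} \<bind> (\<lambda>u. bernoulli_pmf (if xs ! u then p else q) \<bind> (\<lambda>x. return_pmf (xs @ [x])))) f
      = (\<Sum>u<Suc m. measure_pmf.expectation (bernoulli_pmf (if xs ! u then p else q) \<bind> (\<lambda>x. return_pmf (xs @ [x]))) f) / real (card {..<Suc m})"
      by (rule exp_pos) (auto simp: fin_bern set_bind_pmf)
    also have "\<dots> = (\<Sum>u<Suc m. (if xs!u then p else q) * f (xs @ [True])
        + (1 - (if xs!u then p else q)) * f (xs @ [False])) / real (Suc m)"
      unfolding card_lessThan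
      by (intro arg_cong2[where f="(/)"] sum.cong refl exp_bern_ret) (use assms in auto)
    finally show ?thesis .
  qed
  show ?thesis
    apply (simp only: mrw.simps)
    apply (subst exp_bind[OF fin_mrw fin])
    apply (simp only: inner)
    done
qed

lemma lin2:
  fixes f g :: "'a \<Rightarrow> real"
  assumes "finite (set_pmf M)"
  shows "measure_pmf.expectation M (\<lambda>x. a * f x + b * g x + c) = a * measure_pmf.expectation M f + b * measure_pmf.expectation M g + c"
  using assms by (simp add: integrable_measure_pmf_finite)

lemma count_sum: "(\<Sum>u<length xs. if xs!u then (1::real) else 0) = H xs"
proof (induction xs rule: rev_induct)
  case Nil then show ?case by (simp add: H_def)
next
  case (snoc x xs) then show ?case by (simp add: H_def nth_append)
qed

lemma sum_if: "length xs = N \<Longrightarrow> (\<Sum>u<N. if xs!u then a else (b::real)) = b * real N + (a - b) * H xs"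
proof -
  assume "length xs = N"
  have c: "(\<Sum>u<N. if xs!u then (1::real) else 0) = H xs" using count_sum[of xs] \<open>length xs = N\<close> by simp
  have "(\<Sum>u<N. if xs!u then a else (b::real)) = (\<Sum>u<N. b + (a - b) * (if xs!u then 1 else 0))"
    by (intro sum.cong) auto
  also have "\<dots> = b * real N + (a - b) * H xs"
    by (simp add: sum.distrib sum_distrib_left[symmetric] c)
  finally show ?thesis .
qed

lemma H_snoc: "H (xs @ [b]) = H xs + (if b then 1 else 0)"
  by (simp add: H_def)

lemma mrw_EH:
  assumes "0 \<le> q" "q < p" "p \<le> 1"
  shows "measure_pmf.expectation (mrw p q s (Suc (Suc m))) H =
     (1 + (p - q) / real (Suc m)) * measure_pmf.expectation (mrw p q s (Suc m)) H + q"
proof -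
  have "measure_pmf.expectation (mrw p q s (Suc (Suc m))) H =
     measure_pmf.expectation (mrw p q s (Suc m)) (\<lambda>xs. (1 + (p - q) / real (Suc m)) * H xs + 0 * H xs + q)"
  proof (subst mrw_step, (use assms in auto)[4], rule exp_cong[OF fin_mrw])
    fix xs assume "xs \<in> set_pmf (mrw p q s (Suc m))"
    then have l: "length xs = Suc m" by (rule len_mrw)
    have "(\<Sum>u<Suc m. (if xs!u then p else q) * H (xs @ [True]) + (1 - (if xs!u then p else q)) * H (xs @ [False]))
      = (\<Sum>u<Suc m. H xs + (if xs!u then p else q))"
      by (intro sum.cong) (auto simp: H_snoc algebra_simps)
    also have "\<dots> = real (Suc m) * H xs + (q * real (Suc m) + (p - q) * H xs)"
      by (simp add: sum.distrib sum_if[OF l] del: sum.lessThan_Suc)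
    finally have e: "(\<Sum>u<Suc m. (if xs!u then p else q) * H (xs @ [True]) + (1 - (if xs!u then p else q)) * H (xs @ [False])) = real (Suc m) * H xs + (q * real (Suc m) + (p - q) * H xs)" .
    show "(\<Sum>u<Suc m. (if xs!u then p else q) * H (xs @ [True]) + (1 - (if xs!u then p else q)) * H (xs @ [False])) / real (Suc m)
       = (1 + (p - q) / real (Suc m)) * H xs + 0 * H xs + q"
      unfolding e by (simp add: field_simps del: of_nat_Suc)
  qed
  also have "\<dots> = (1 + (p - q) / real (Suc m)) * measure_pmf.expectation (mrw p q s (Suc m)) H + q"
    by (subst lin2[OF fin_mrw]) simp
  finally show ?thesis .
qed

lemma mrw_EH2:
  assumes "0 \<le> q" "q < p" "p \<le> 1"
  shows "measure_pmf.expectation (mrw p q s (Suc (Suc m))) (\<lambda>xs. H xs ^ 2) =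
     (1 + 2 * (p - q) / real (Suc m)) * measure_pmf.expectation (mrw p q s (Suc m)) (\<lambda>xs. H xs ^ 2)
     + (2 * q + (p - q) / real (Suc m)) * measure_pmf.expectation (mrw p q s (Suc m)) H + q"
proof -
  have "measure_pmf.expectation (mrw p q s (Suc (Suc m))) (\<lambda>xs. H xs ^ 2) =
     measure_pmf.expectation (mrw p q s (Suc m)) (\<lambda>xs. (1 + 2 * (p - q) / real (Suc m)) * H xs ^ 2
        + (2 * q + (p - q) / real (Suc m)) * H xs + q)"
  proof (subst mrw_step, (use assms in auto)[4], rule exp_cong[OF fin_mrw])
    fix xs assume "xs \<in> set_pmf (mrw p q s (Suc m))"
    then have l: "length xs = Suc m" by (rule len_mrw)
    have "(\<Sum>u<Suc m. (if xs!u then p else q) * H (xs @ [True]) ^ 2 + (1 - (if xs!u then p else q)) * H (xs @ [False]) ^ 2)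
      = (\<Sum>u<Suc m. H xs ^ 2 + (2 * H xs + 1) * (if xs!u then p else q))"
      by (intro sum.cong) (auto simp: H_snoc algebra_simps power2_eq_square)
    also have "\<dots> = real (Suc m) * H xs ^ 2 + (2 * H xs + 1) * (q * real (Suc m) + (p - q) * H xs)"
      by (simp add: sum.distrib sum_if[OF l] sum_distrib_left[symmetric] del: sum.lessThan_Suc)
    finally have e: "(\<Sum>u<Suc m. (if xs!u then p else q) * H (xs @ [True]) ^ 2 + (1 - (if xs!u then p else q)) * H (xs @ [False]) ^ 2) = real (Suc m) * H xs ^ 2 + (2 * H xs + 1) * (q * real (Suc m) + (p - q) * H xs)" .
    show "(\<Sum>u<Suc m. (if xs!u then p else q) * H (xs @ [True]) ^ 2 + (1 - (if xs!u then p else q)) * H (xs @ [False]) ^ 2) / real (Suc m)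
       = (1 + 2 * (p - q) / real (Suc m)) * H xs ^ 2 + (2 * q + (p - q) / real (Suc m)) * H xs + q"
      unfolding e by (simp add: field_simps power2_eq_square del: of_nat_Suc)
  qed
  also have "\<dots> = (1 + 2 * (p - q) / real (Suc m)) * measure_pmf.expectation (mrw p q s (Suc m)) (\<lambda>xs. H xs ^ 2)
     + (2 * q + (p - q) / real (Suc m)) * measure_pmf.expectation (mrw p q s (Suc m)) H + q"
    by (subst lin2[OF fin_mrw]) simp
  finally show ?thesis .
qed


lemma fresh_reach:
  assumes "\<And>x y. R x y \<Longrightarrow> x \<noteq> w \<and> y \<noteq> w" "R\<^sup>*\<^sup>* w z"
  shows "z = w"
  using assms(2) by (induction rule: rtranclp_induct) (use assms(1) in auto)

lemma fresh_noreach: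
  assumes "\<And>x y. R x y \<Longrightarrow> x \<noteq> w \<and> y \<noteq> w" "R\<^sup>*\<^sup>* v w"
  shows "v = w"
  using assms(2) by (cases rule: rtranclp.cases) (use assms(1) in auto)

lemma reach_add:
  assumes fr: "\<And>x y. R x y \<Longrightarrow> x \<noteq> w \<and> y \<noteq> w" and "u \<noteq> w" "v \<noteq> w"
  shows "(\<lambda>x y. R x y \<or> (b \<and> ((x = w \<and> y = u) \<or> (y = w \<and> x = u))))\<^sup>*\<^sup>* v z
     \<longleftrightarrow> R\<^sup>*\<^sup>* v z \<or> (b \<and> z = w \<and> R\<^sup>*\<^sup>* v u)" (is "?R'\<^sup>*\<^sup>* v z \<longleftrightarrow> _")
proof
  assume "?R'\<^sup>*\<^sup>* v z"
  then show "R\<^sup>*\<^sup>* v z \<or> (b \<and> z = w \<and> R\<^sup>*\<^sup>* v u)"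
  proof (induction rule: rtranclp_induct)
    case base then show ?case by simp
  next
    case (step y z)
    show ?case
    proof (cases "R y z")
      case True
      with fr have "y \<noteq> w" by blast
      with step.IH have "R\<^sup>*\<^sup>* v y" by blast
      with True show ?thesis by (meson rtranclp.rtrancl_into_rtrancl)
    next
      case False
      with step.hyps(2) have b: "b" and yz: "(y = w \<and> z = u) \<or> (z = w \<and> y = u)" by auto
      show ?thesis
      proof (cases "y = w")
        case True
        with yz assms have zu: "z = u" by auto
        from step.IH True have "R\<^sup>*\<^sup>* v w \<or> R\<^sup>*\<^sup>* v u" by auto
        then have "R\<^sup>*\<^sup>* v u" using fresh_noreach[OF fr] \<open>v \<noteq> w\<close> by blast
        with zu show ?thesis by simp
      next
        case False
        with yz have "z = w" "y = u" by auto
        with step.IH False b show ?thesis by auto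
      qed
    qed
  qed
next
  have mono: "R\<^sup>*\<^sup>* x y \<Longrightarrow> ?R'\<^sup>*\<^sup>* x y" for x y
    by (rule rtranclp_mono[THEN predicate2D, rotated]) auto
  assume "R\<^sup>*\<^sup>* v z \<or> (b \<and> z = w \<and> R\<^sup>*\<^sup>* v u)"
  then show "?R'\<^sup>*\<^sup>* v z"
  proof
    assume "R\<^sup>*\<^sup>* v z" then show ?thesis by (rule mono)
  next
    assume h: "b \<and> z = w \<and> R\<^sup>*\<^sup>* v u"
    then have "?R'\<^sup>*\<^sup>* v u" using mono by blast
    moreover have "?R' u z" using h by auto
    ultimately show ?thesis by (rule rtranclp.rtrancl_into_rtrancl)
  qed
qed

definition valid :: "(nat \<times> bool) list \<Rightarrow> bool" where
  "valid t \<longleftrightarrow> (\<forall>k<length t. 1 \<le> fst (t!k) \<and> fst (t!k) \<le> k + 1)"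

lemma rrt_supp: "t \<in> set_pmf (rrt_perc a (Suc m)) \<Longrightarrow> length t = m \<and> valid t"
proof (induction m arbitrary: t)
  case 0 then show ?case by (simp add: valid_def)
next
  case (Suc m)
  then obtain t0 u b where t: "t = t0 @ [(u, b)]" "t0 \<in> set_pmf (rrt_perc a (Suc m))" "u \<in> {1..Suc m}"
    by (auto simp: set_bind_pmf)
  with Suc.IH have "length t0 = m" "valid t0" by auto
  with t show ?case by (auto simp: valid_def nth_append less_Suc_eq)
qed

lemma perc_adj_snoc: "perc_adj (t @ [(u, b)]) x y \<longleftrightarrow>
   perc_adj t x y \<or> (b \<and> ((x = length t + 2 \<and> y = u) \<or> (y = length t + 2 \<and> x = u)))"
proof -
  have "perc_adj (t @ [(u, b)]) x y \<longleftrightarrow> (\<exists>k<Suc (length t). snd ((t @ [(u, b)]) ! k) \<and>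
      ((x = k + 2 \<and> y = fst ((t @ [(u, b)]) ! k)) \<or> (y = k + 2 \<and> x = fst ((t @ [(u, b)]) ! k))))"
    by (simp add: perc_adj_def)
  also have "\<dots> \<longleftrightarrow> (\<exists>k<length t. snd ((t @ [(u, b)]) ! k) \<and>
      ((x = k + 2 \<and> y = fst ((t @ [(u, b)]) ! k)) \<or> (y = k + 2 \<and> x = fst ((t @ [(u, b)]) ! k))))
     \<or> (b \<and> ((x = length t + 2 \<and> y = u) \<or> (y = length t + 2 \<and> x = u)))"
    by (simp only: less_Suc_eq ex_disj_distrib conj_disj_distribR) simp
  also have "(\<exists>k<length t. snd ((t @ [(u, b)]) ! k) \<and>
      ((x = k + 2 \<and> y = fst ((t @ [(u, b)]) ! k)) \<or> (y = k + 2 \<and> x = fst ((t @ [(u, b)]) ! k))))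
     \<longleftrightarrow> perc_adj t x y"
    unfolding perc_adj_def by (intro ex_cong1) (simp add: nth_append)
  finally show ?thesis .
qed

lemma perc_adj_range: "valid t \<Longrightarrow> perc_adj t x y \<Longrightarrow> 1 \<le> x \<and> x \<le> length t + 1 \<and> 1 \<le> y \<and> y \<le> length t + 1"
proof -
  assume v: "valid t" and "perc_adj t x y"
  then obtain k where k: "k < length t" "(x = k + 2 \<and> y = fst (t ! k)) \<or> (y = k + 2 \<and> x = fst (t ! k))"
    unfolding perc_adj_def by blast
  with v have "1 \<le> fst (t!k)" "fst (t!k) \<le> k + 1" unfolding valid_def by auto
  with k show ?thesis by auto
qed

lemma perc_adj_sym: "symp (perc_adj t)"
  unfolding perc_adj_def symp_def by blast

lemma cluster_self: "v \<in> cluster t v"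
  by (simp add: cluster_def)

lemma cluster_eq: "w \<in> cluster t v \<Longrightarrow> cluster t w = cluster t v"
proof -
  assume "w \<in> cluster t v"
  then have vw: "(perc_adj t)\<^sup>*\<^sup>* v w" by (simp add: cluster_def)
  then have wv: "(perc_adj t)\<^sup>*\<^sup>* w v" using symp_rtranclp[OF perc_adj_sym] by (meson sympD)
  show ?thesis unfolding cluster_def
    using vw wv by (auto intro: rtranclp_trans)
qed

lemma cluster_sub: "valid t \<Longrightarrow> v \<in> {1..length t + 1} \<Longrightarrow> cluster t v \<subseteq> {1..length t + 1}"
proof
  fix z assume "valid t" "v \<in> {1..length t + 1}" "z \<in> cluster t v"
  then have "(perc_adj t)\<^sup>*\<^sup>* v z" by (simp add: cluster_def)
  then show "z \<in> {1..length t + 1}"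
    by (induction rule: rtranclp_induct) (use \<open>v \<in> _\<close> perc_adj_range[OF \<open>valid t\<close>] in auto)
qed

lemma cluster_snoc:
  assumes "valid t" "u \<in> {1..length t + 1}" "v \<in> {1..length t + 1}"
  shows "cluster (t @ [(u, b)]) v = cluster t v \<union> (if b \<and> u \<in> cluster t v then {length t + 2} else {})"
proof -
  have fr: "\<And>x y. perc_adj t x y \<Longrightarrow> x \<noteq> length t + 2 \<and> y \<noteq> length t + 2"
    using perc_adj_range[OF assms(1)] by fastforce
  have eq: "perc_adj (t @ [(u, b)]) = (\<lambda>x y. perc_adj t x y \<or> (b \<and> ((x = length t + 2 \<and> y = u) \<or> (y = length t + 2 \<and> x = u))))"
    by (intro ext) (simp add: perc_adj_snoc)
  show ?thesis
  proof (rule set_eqI)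
    fix z
    have uw: "u \<noteq> length t + 2" and vw: "v \<noteq> length t + 2" using assms by auto
    show "z \<in> cluster (t @ [(u, b)]) v \<longleftrightarrow> z \<in> cluster t v \<union> (if b \<and> u \<in> cluster t v then {length t + 2} else {})"
      unfolding cluster_def eq mem_Collect_eq using reach_add[OF fr uw vw, where b=b and z=z] by auto
  qed
qed

lemma cluster_snoc_new:
  assumes "valid t" "u \<in> {1..length t + 1}"
  shows "cluster (t @ [(u, b)]) (length t + 2) = (if b then insert (length t + 2) (cluster t u) else {length t + 2})"
proof (cases b)
  case True
  have "length t + 2 \<in> cluster (t @ [(u, b)]) u"
    using cluster_snoc[OF assms assms(2), of b] True cluster_self[of u t] by auto
  then have "cluster (t @ [(u, b)]) (length t + 2) = cluster (t @ [(u, b)]) u" by (rule cluster_eq)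
  also have "\<dots> = insert (length t + 2) (cluster t u)"
    using cluster_snoc[OF assms assms(2), of b] True cluster_self[of u t] by auto
  finally show ?thesis using True by simp
next
  case False
  have fr: "\<And>x y. perc_adj t x y \<Longrightarrow> x \<noteq> length t + 2 \<and> y \<noteq> length t + 2"
    using perc_adj_range[OF assms(1)] by fastforce
  have eq: "perc_adj (t @ [(u, b)]) = perc_adj t"
    by (intro ext) (simp add: perc_adj_snoc False)
  show ?thesis unfolding cluster_def eq using False fresh_reach[OF fr] by auto
qed


lemma rrt_step:
  fixes f :: "(nat \<times> bool) list \<Rightarrow> real"
  assumes "0 \<le> a" "a \<le> 1"
  shows "measure_pmf.expectation (rrt_perc a (Suc (Suc m))) f =
    measure_pmf.expectation (rrt_perc a (Suc m)) (\<lambda>t. (\<Sum>u\<in>{1..Suc m}. a * f (t @ [(u, True)])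
        + (1 - a) * f (t @ [(u, False)])) / real (Suc m))"
proof -
  have fin: "finite (set_pmf (pmf_of_set {1..Suc m} \<bind> (\<lambda>u. bernoulli_pmf a \<bind> (\<lambda>b. return_pmf (t @ [(u, b)])))))" for t
    by (auto simp: set_bind_pmf intro!: finite_UN_I fin_bern)
  have inner: "measure_pmf.expectation (pmf_of_set {1..Suc m} \<bind> (\<lambda>u. bernoulli_pmf a \<bind> (\<lambda>b. return_pmf (t @ [(u, b)])))) f
     = (\<Sum>u\<in>{1..Suc m}. a * f (t @ [(u, True)]) + (1 - a) * f (t @ [(u, False)])) / real (Suc m)" for t
  proof -
    have "measure_pmf.expectation (pmf_of_set {1..Suc m} \<bind> (\<lambda>u. bernoulli_pmf a \<bind> (\<lambda>b. return_pmf (t @ [(u, b)])))) f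
      = (\<Sum>u\<in>{1..Suc m}. measure_pmf.expectation (bernoulli_pmf a \<bind> (\<lambda>b. return_pmf (t @ [(u, b)]))) f) / real (card {1..Suc m})"
      by (rule exp_pos) (auto simp: fin_bern set_bind_pmf)
    also have "\<dots> = (\<Sum>u\<in>{1..Suc m}. a * f (t @ [(u, True)]) + (1 - a) * f (t @ [(u, False)])) / real (Suc m)"
      unfolding card_atLeastAtMost
      by (intro arg_cong2[where f="(/)"] sum.cong refl exp_bern_ret) (use assms in auto)
    finally show ?thesis .
  qed
  show ?thesis
    apply (simp only: rrt_perc.simps)
    apply (subst exp_bind[OF fin_rrt fin])
    apply (simp only: inner)
    done
qed

definition cc :: "(nat \<times> bool) list \<Rightarrow> real" where
  "cc t = real (card (cluster t 1))"

definition TT :: "nat \<Rightarrow> (nat \<times> bool) list \<Rightarrow> real" where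
  "TT n t = (\<Sum>v\<in>{1..n}. real (card (cluster t v)))"

lemma fin_cluster: "valid t \<Longrightarrow> v \<in> {1..length t + 1} \<Longrightarrow> finite (cluster t v)"
  using cluster_sub finite_subset by blast

lemma card_snoc:
  assumes "valid t" "u \<in> {1..length t + 1}" "v \<in> {1..length t + 1}"
  shows "real (card (cluster (t @ [(u, b)]) v)) = real (card (cluster t v)) + (if b \<and> u \<in> cluster t v then 1 else 0)"
proof -
  have "length t + 2 \<notin> cluster t v" using cluster_sub[OF assms(1,3)] by auto
  then show ?thesis
    using cluster_snoc[OF assms, of b] fin_cluster[OF assms(1,3)] by auto
qed

lemma card_new:
  assumes "valid t" "u \<in> {1..length t + 1}"
  shows "real (card (cluster (t @ [(u, b)]) (length t + 2))) = (if b then real (card (cluster t u)) + 1 else 1)"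
proof -
  have "length t + 2 \<notin> cluster t u" using cluster_sub[OF assms(1,2)] by auto
  then show ?thesis
    using cluster_snoc_new[OF assms, of b] fin_cluster[OF assms(1,2)] by auto
qed

lemma sum_ind:
  assumes "finite V" "B \<subseteq> V"
  shows "(\<Sum>u\<in>V. if u \<in> B then 1 else 0 :: real) = real (card B)"
proof -
  have "(\<Sum>u\<in>V. if u \<in> B then 1 else 0 :: real) = (\<Sum>u\<in>B. 1)"
    by (rule sum.mono_neutral_cong_right) (use assms in auto)
  then show ?thesis by simp
qed

lemma mem_sym: "u \<in> cluster t v \<longleftrightarrow> v \<in> cluster t u"
  using cluster_eq cluster_self by metis

lemma sum_mem:
  assumes "valid t" "v \<in> {1..length t + 1}"
  shows "(\<Sum>u\<in>{1..length t + 1}. if u \<in> cluster t v then 1 else 0 :: real) = real (card (cluster t v))"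
  by (rule sum_ind) (use cluster_sub[OF assms] in auto)

lemma sum_mem2:
  assumes "valid t" "u \<in> {1..length t + 1}"
  shows "(\<Sum>v\<in>{1..length t + 1}. if u \<in> cluster t v then 1 else 0 :: real) = real (card (cluster t u))"
proof -
  have "(\<Sum>v\<in>{1..length t + 1}. if u \<in> cluster t v then 1 else 0 :: real) = (\<Sum>v\<in>{1..length t + 1}. if v \<in> cluster t u then 1 else 0 :: real)"
    by (intro sum.cong refl) (simp add: mem_sym[of u t])
  also have "\<dots> = real (card (cluster t u))" by (rule sum_mem[OF assms])
  finally show ?thesis .
qed

lemma TT_snoc:
  assumes "valid t" "u \<in> {1..length t + 1}"
  shows "TT (length t + 2) (t @ [(u, b)]) = TT (length t + 1) t + (if b then 2 * real (card (cluster t u)) + 1 else 1)"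
proof -
  have "TT (length t + 2) (t @ [(u, b)]) = (\<Sum>v\<in>{1..length t + 1}. real (card (cluster (t @ [(u, b)]) v)))
       + real (card (cluster (t @ [(u, b)]) (length t + 2)))"
    unfolding TT_def by (simp add: add.commute)
  also have "(\<Sum>v\<in>{1..length t + 1}. real (card (cluster (t @ [(u, b)]) v)))
     = (\<Sum>v\<in>{1..length t + 1}. real (card (cluster t v)) + (if b then (if u \<in> cluster t v then 1 else 0) else 0))"
    by (intro sum.cong refl) (simp add: card_snoc[OF assms])
  also have "\<dots> = TT (length t + 1) t + (if b then (\<Sum>v\<in>{1..length t + 1}. if u \<in> cluster t v then 1 else 0 :: real) else 0)"
    unfolding TT_def by (cases b) (simp_all only: sum.distrib if_True if_False sum.neutral_const add_0_right)
  also have "\<dots> = TT (length t + 1) t + (if b then real (card (cluster t u)) else 0)"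
    by (simp only: sum_mem2[OF assms])
  finally show ?thesis using card_new[OF assms, of b] by simp
qed


lemma cc_snoc:
  assumes "valid t" "u \<in> {1..length t + 1}"
  shows "cc (t @ [(u, b)]) = cc t + (if b \<and> u \<in> cluster t 1 then 1 else 0)"
  unfolding cc_def by (rule card_snoc[OF assms]) simp

lemma rrt_Ec:
  assumes "0 \<le> a" "a \<le> 1"
  shows "measure_pmf.expectation (rrt_perc a (Suc (Suc m))) cc =
     (1 + a / real (Suc m)) * measure_pmf.expectation (rrt_perc a (Suc m)) cc"
proof -
  have "measure_pmf.expectation (rrt_perc a (Suc (Suc m))) cc =
     measure_pmf.expectation (rrt_perc a (Suc m)) (\<lambda>t. (1 + a / real (Suc m)) * cc t + 0 * cc t + 0)"
  proof (subst rrt_step[OF assms], rule exp_cong[OF fin_rrt])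
    fix t assume "t \<in> set_pmf (rrt_perc a (Suc m))"
    then have l: "length t = m" and v: "valid t" using rrt_supp by auto
    define V where "V = {1..length t + 1}"
    have V': "{1..Suc m} = V" using l V_def by simp
    have one: "1 \<in> {1..length t + 1}" by simp
    have "(\<Sum>u\<in>V. a * cc (t @ [(u, True)]) + (1 - a) * cc (t @ [(u, False)]))
       = (\<Sum>u\<in>V. cc t + a * (if u \<in> cluster t 1 then 1 else 0))"
      by (intro sum.cong refl) (simp add: cc_snoc[OF v] V_def algebra_simps)
    also have "\<dots> = real (card V) * cc t + a * cc t"
      by (simp only: sum.distrib sum_distrib_left[symmetric] sum_constant V_def sum_mem[OF v one] cc_def)
    finally have e: "(\<Sum>u\<in>V. a * cc (t @ [(u, True)]) + (1 - a) * cc (t @ [(u, False)])) = real (card V) * cc t + a * cc t" .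
    have cV: "card V = Suc m" using l V_def by simp
    show "(\<Sum>u\<in>{1..Suc m}. a * cc (t @ [(u, True)]) + (1 - a) * cc (t @ [(u, False)])) / real (Suc m)
       = (1 + a / real (Suc m)) * cc t + 0 * cc t + 0"
      unfolding V' e cV by (simp add: field_simps del: of_nat_Suc)
  qed
  also have "\<dots> = (1 + a / real (Suc m)) * measure_pmf.expectation (rrt_perc a (Suc m)) cc"
    by (subst lin2[OF fin_rrt]) simp
  finally show ?thesis .
qed

lemma rrt_Ec2:
  assumes "0 \<le> a" "a \<le> 1"
  shows "measure_pmf.expectation (rrt_perc a (Suc (Suc m))) (\<lambda>t. cc t ^ 2) =
     (1 + 2 * a / real (Suc m)) * measure_pmf.expectation (rrt_perc a (Suc m)) (\<lambda>t. cc t ^ 2)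
     + a / real (Suc m) * measure_pmf.expectation (rrt_perc a (Suc m)) cc"
proof -
  have "measure_pmf.expectation (rrt_perc a (Suc (Suc m))) (\<lambda>t. cc t ^ 2) =
     measure_pmf.expectation (rrt_perc a (Suc m)) (\<lambda>t. (1 + 2 * a / real (Suc m)) * cc t ^ 2 + a / real (Suc m) * cc t + 0)"
  proof (subst rrt_step[OF assms], rule exp_cong[OF fin_rrt])
    fix t assume "t \<in> set_pmf (rrt_perc a (Suc m))"
    then have l: "length t = m" and v: "valid t" using rrt_supp by auto
    define V where "V = {1..length t + 1}"
    have V': "{1..Suc m} = V" using l V_def by simp
    have one: "1 \<in> {1..length t + 1}" by simp
    have "(\<Sum>u\<in>V. a * cc (t @ [(u, True)]) ^ 2 + (1 - a) * cc (t @ [(u, False)]) ^ 2)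
       = (\<Sum>u\<in>V. cc t ^ 2 + (a * (2 * cc t + 1)) * (if u \<in> cluster t 1 then 1 else 0))"
      by (intro sum.cong refl) (simp add: cc_snoc[OF v] V_def algebra_simps power2_eq_square)
    also have "\<dots> = real (card V) * cc t ^ 2 + (a * (2 * cc t + 1)) * cc t"
      by (simp only: sum.distrib sum_distrib_left[symmetric] sum_constant V_def sum_mem[OF v one] cc_def)
    finally have e: "(\<Sum>u\<in>V. a * cc (t @ [(u, True)]) ^ 2 + (1 - a) * cc (t @ [(u, False)]) ^ 2) = real (card V) * cc t ^ 2 + (a * (2 * cc t + 1)) * cc t" .
    have cV: "card V = Suc m" using l V_def by simp
    show "(\<Sum>u\<in>{1..Suc m}. a * cc (t @ [(u, True)]) ^ 2 + (1 - a) * cc (t @ [(u, False)]) ^ 2) / real (Suc m)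
       = (1 + 2 * a / real (Suc m)) * cc t ^ 2 + a / real (Suc m) * cc t + 0"
      unfolding V' e cV by (simp add: field_simps power2_eq_square del: of_nat_Suc)
  qed
  also have "\<dots> = (1 + 2 * a / real (Suc m)) * measure_pmf.expectation (rrt_perc a (Suc m)) (\<lambda>t. cc t ^ 2)
     + a / real (Suc m) * measure_pmf.expectation (rrt_perc a (Suc m)) cc"
    by (subst lin2[OF fin_rrt]) simp
  finally show ?thesis .
qed

lemma rrt_ET:
  assumes "0 \<le> a" "a \<le> 1"
  shows "measure_pmf.expectation (rrt_perc a (Suc (Suc m))) (TT (Suc (Suc m))) =
     (1 + 2 * a / real (Suc m)) * measure_pmf.expectation (rrt_perc a (Suc m)) (TT (Suc m)) + 1"
proof -
  have "measure_pmf.expectation (rrt_perc a (Suc (Suc m))) (TT (Suc (Suc m))) =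
     measure_pmf.expectation (rrt_perc a (Suc m)) (\<lambda>t. (1 + 2 * a / real (Suc m)) * TT (Suc m) t + 0 * TT (Suc m) t + 1)"
  proof (subst rrt_step[OF assms], rule exp_cong[OF fin_rrt])
    fix t assume "t \<in> set_pmf (rrt_perc a (Suc m))"
    then have l: "length t = m" and v: "valid t" using rrt_supp by auto
    define V where "V = {1..length t + 1}"
    have V': "{1..Suc m} = V" using l V_def by simp
    have T1: "TT (Suc (Suc m)) = TT (length t + 2)" "TT (Suc m) = TT (length t + 1)" using l by auto
    have "(\<Sum>u\<in>V. a * TT (length t + 2) (t @ [(u, True)]) + (1 - a) * TT (length t + 2) (t @ [(u, False)]))
       = (\<Sum>u\<in>V. (TT (length t + 1) t + 1) + (2 * a) * real (card (cluster t u)))"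
    proof (intro sum.cong refl)
      fix u assume "u \<in> V"
      then have u: "u \<in> {1..length t + 1}" unfolding V_def .
      show "a * TT (length t + 2) (t @ [(u, True)]) + (1 - a) * TT (length t + 2) (t @ [(u, False)])
         = (TT (length t + 1) t + 1) + (2 * a) * real (card (cluster t u))"
        unfolding TT_snoc[OF v u] by (simp add: algebra_simps)
    qed
    also have "\<dots> = real (card V) * (TT (length t + 1) t + 1) + (2 * a) * TT (length t + 1) t"
      by (simp only: sum.distrib sum_distrib_left[symmetric] sum_constant V_def TT_def)
        (simp add: algebra_simps)
    finally have e: "(\<Sum>u\<in>V. a * TT (length t + 2) (t @ [(u, True)]) + (1 - a) * TT (length t + 2) (t @ [(u, False)]))
       = real (card V) * (TT (length t + 1) t + 1) + (2 * a) * TT (length t + 1) t" .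
    have cV: "card V = Suc m" using l V_def by simp
    show "(\<Sum>u\<in>{1..Suc m}. a * TT (Suc (Suc m)) (t @ [(u, True)]) + (1 - a) * TT (Suc (Suc m)) (t @ [(u, False)])) / real (Suc m)
       = (1 + 2 * a / real (Suc m)) * TT (Suc m) t + 0 * TT (Suc m) t + 1"
      unfolding V' T1 e cV by (simp add: field_simps del: of_nat_Suc)
  qed
  also have "\<dots> = (1 + 2 * a / real (Suc m)) * measure_pmf.expectation (rrt_perc a (Suc m)) (TT (Suc m)) + 1"
    by (subst lin2[OF fin_rrt]) simp
  finally show ?thesis .
qed

lemma clusters_sum:
  assumes "valid t" "length t = m"
  shows "(\<Sum>C\<in>clusters (Suc m) t. real (card C) ^ 2) = TT (Suc m) t"
proof -
  define V where "V = {1..length t + 1}"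
  have V': "{1..Suc m} = V" using assms V_def by simp
  have "TT (Suc m) t = (\<Sum>v\<in>V. real (card (cluster t v)))" unfolding TT_def V' ..
  also have "\<dots> = (\<Sum>C\<in>cluster t ` V. \<Sum>v\<in>{x. x \<in> V \<and> cluster t x = C}. real (card (cluster t v)))"
    by (rule sum.image_gen) (simp add: V_def)
  also have "\<dots> = (\<Sum>C\<in>cluster t ` V. real (card C) ^ 2)"
  proof (rule sum.cong[OF refl])
    fix C assume "C \<in> cluster t ` V"
    then obtain w where w: "w \<in> V" "C = cluster t w" by blast
    have set: "{x. x \<in> V \<and> cluster t x = C} = C"
    proof
      show "{x. x \<in> V \<and> cluster t x = C} \<subseteq> C" using cluster_self by blast
      show "C \<subseteq> {x. x \<in> V \<and> cluster t x = C}"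
        using w cluster_sub[OF assms(1)] cluster_eq unfolding V_def by blast
    qed
    have "(\<Sum>v\<in>{x. x \<in> V \<and> cluster t x = C}. real (card (cluster t v))) = (\<Sum>v\<in>C. real (card C))"
      unfolding set using w cluster_eq by (intro sum.cong refl) auto
    then show "(\<Sum>v\<in>{x. x \<in> V \<and> cluster t x = C}. real (card (cluster t v))) = real (card C) ^ 2"
      by (simp add: power2_eq_square)
  qed
  finally show ?thesis unfolding clusters_def V' by simp
qed

lemma alg1:
  fixes N q \<rho> \<alpha> s e EH :: real
  assumes "N > 0" "q = \<rho> * (1 - \<alpha>)" "EH = \<rho> * N + (s - \<rho>) * e"
  shows "(1 + \<alpha> / N) * EH + q = \<rho> * (N + 1) + (s - \<rho>) * ((1 + \<alpha> / N) * e)"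
  using assms(1) unfolding assms(2,3) by (simp add: field_simps)

lemma alg2:
  fixes N q \<rho> \<alpha> s e f g EH EH2 :: real
  assumes "N > 0" "q = \<rho> * (1 - \<alpha>)" "EH = \<rho> * N + (s - \<rho>) * e"
    "EH2 = \<rho> * (1 - \<rho>) * g + (1 - 2 * \<rho>) * (s - \<rho>) * f + \<rho>^2 * N^2 + 2 * \<rho> * (s - \<rho>) * N * e"
  shows "(1 + 2 * \<alpha> / N) * EH2 + (2 * q + \<alpha> / N) * EH + q =
    \<rho> * (1 - \<rho>) * ((1 + 2 * \<alpha> / N) * g + 1) + (1 - 2 * \<rho>) * (s - \<rho>) * ((1 + 2 * \<alpha> / N) * f + \<alpha> / N * e)
    + \<rho>^2 * (N + 1)^2 + 2 * \<rho> * (s - \<rho>) * (N + 1) * ((1 + \<alpha> / N) * e)"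
  using assms(1) unfolding assms(2,3,4) by (simp add: field_simps power2_eq_square)

lemma base_mrw:
  fixes g :: "bool list \<Rightarrow> real"
  assumes "0 \<le> s" "s \<le> 1"
  shows "measure_pmf.expectation (mrw p q s (Suc 0)) g = s * g [True] + (1 - s) * g [False]"
  using assms by (simp only: mrw.simps map_pmf_def exp_bern_ret)

lemma cluster_nil: "cluster [] 1 = {1}"
proof -
  have "(perc_adj [])\<^sup>*\<^sup>* 1 w \<Longrightarrow> w = 1" for w
    by (induction rule: rtranclp_induct) (auto simp: perc_adj_def)
  then show ?thesis unfolding cluster_def by auto
qed

theorem theoremA3:
  fixes p q s :: real and n :: nat
  assumes "0 \<le> q" "q < p" "p < 1" "0 \<le> s" "s \<le> 1" "1 \<le> n"
  defines "\<alpha> \<equiv> p - q"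
  defines "\<rho> \<equiv> q / (1 - \<alpha>)"
  shows "measure_pmf.expectation (mrw p q s n) H =
           \<rho> * real n + (s - \<rho>) *
             measure_pmf.expectation (rrt_perc \<alpha> n) (\<lambda>t. real (card (cluster t 1)))
       \<and> measure_pmf.variance (mrw p q s n) H =
           \<rho> * (1 - \<rho>) *
             measure_pmf.expectation (rrt_perc \<alpha> n)
               (\<lambda>t. \<Sum>C\<in>clusters n t. real (card C) ^ 2)
         + (1 - 2 * \<rho>) * (s - \<rho>) *
             measure_pmf.expectation (rrt_perc \<alpha> n) (\<lambda>t. real (card (cluster t 1)) ^ 2)
         - (s - \<rho>) ^ 2 *
             (measure_pmf.expectation (rrt_perc \<alpha> n) (\<lambda>t. real (card (cluster t 1)))) ^ 2"
proof -
  have a0: "0 \<le> \<alpha>" and a1: "\<alpha> \<le> 1" using assms unfolding \<alpha>_def by auto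
  have q\<rho>: "q = \<rho> * (1 - \<alpha>)" using assms unfolding \<rho>_def \<alpha>_def by auto
  have pq: "p - q = \<alpha>" unfolding \<alpha>_def ..
  have qs: "0 \<le> q" "q < p" "p \<le> 1" using assms by auto
  define EH where "EH m = measure_pmf.expectation (mrw p q s (Suc m)) H" for m
  define EH2 where "EH2 m = measure_pmf.expectation (mrw p q s (Suc m)) (\<lambda>xs. H xs ^ 2)" for m
  define e where "e m = measure_pmf.expectation (rrt_perc \<alpha> (Suc m)) cc" for m
  define f where "f m = measure_pmf.expectation (rrt_perc \<alpha> (Suc m)) (\<lambda>t. cc t ^ 2)" for m
  define g where "g m = measure_pmf.expectation (rrt_perc \<alpha> (Suc m)) (TT (Suc m))" for m
  have main: "EH m = \<rho> * real (Suc m) + (s - \<rho>) * e m \<and>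
    EH2 m = \<rho> * (1 - \<rho>) * g m + (1 - 2 * \<rho>) * (s - \<rho>) * f m + \<rho>^2 * real (Suc m)^2 + 2 * \<rho> * (s - \<rho>) * real (Suc m) * e m" for m
  proof (induction m)
    case 0
    have "e 0 = 1" "f 0 = 1" "g 0 = 1"
      unfolding e_def f_def g_def using cluster_nil by (simp_all add: cc_def TT_def)
    moreover have "EH 0 = s" "EH2 0 = s"
      unfolding EH_def EH2_def using assms by (simp_all add: base_mrw H_def)
    ultimately show ?case by (simp add: algebra_simps power2_eq_square)
  next
    case (Suc m)
    define N where "N = real (Suc m)"
    have N: "N > 0" "real (Suc (Suc m)) = N + 1" unfolding N_def by auto
    have r1: "EH (Suc m) = (1 + \<alpha> / N) * EH m + q"
      unfolding EH_def N_def using mrw_EH[OF qs, of s m] pq by simp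
    have r2: "EH2 (Suc m) = (1 + 2 * \<alpha> / N) * EH2 m + (2 * q + \<alpha> / N) * EH m + q"
      unfolding EH_def EH2_def N_def using mrw_EH2[OF qs, of s m] pq by simp
    have r3: "e (Suc m) = (1 + \<alpha> / N) * e m"
      unfolding e_def N_def using rrt_Ec[OF a0 a1, of m] by simp
    have r4: "f (Suc m) = (1 + 2 * \<alpha> / N) * f m + \<alpha> / N * e m"
      unfolding e_def f_def N_def using rrt_Ec2[OF a0 a1, of m] by simp
    have r5: "g (Suc m) = (1 + 2 * \<alpha> / N) * g m + 1"
      unfolding g_def N_def using rrt_ET[OF a0 a1, of m] by simp
    have IH1: "EH m = \<rho> * N + (s - \<rho>) * e m" and
      IH2: "EH2 m = \<rho> * (1 - \<rho>) * g m + (1 - 2 * \<rho>) * (s - \<rho>) * f m + \<rho>^2 * N^2 + 2 * \<rho> * (s - \<rho>) * N * e m"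
      using Suc.IH unfolding N_def by auto
    show ?case unfolding N(2) r1 r2 r3 r4 r5
      using alg1[OF N(1) q\<rho> IH1] alg2[OF N(1) q\<rho> IH1 IH2] by simp
  qed
  obtain m where n: "n = Suc m" using assms(6) by (cases n) auto
  have ccE: "(\<lambda>t. real (card (cluster t 1))) = cc" by (rule ext) (simp add: cc_def)
  have TTE: "measure_pmf.expectation (rrt_perc \<alpha> n) (\<lambda>t. \<Sum>C\<in>clusters n t. real (card C) ^ 2) = g m"
    unfolding g_def n
    by (rule exp_cong[OF fin_rrt]) (use rrt_supp clusters_sum in blast)
  have var: "measure_pmf.variance (mrw p q s n) H = EH2 m - (EH m)^2"
    unfolding EH_def EH2_def n
    by (rule prob_space.variance_eq[OF prob_space_measure_pmf]) (simp_all add: integrable_measure_pmf_finite fin_mrw)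
  have E1: "measure_pmf.expectation (rrt_perc \<alpha> n) (\<lambda>t. real (card (cluster t 1))) = e m"
    unfolding e_def n ccE ..
  have ccE2: "(\<lambda>t. real (card (cluster t 1)) ^ 2) = (\<lambda>t. cc t ^ 2)" by (rule ext) (simp add: cc_def)
  have E2: "measure_pmf.expectation (rrt_perc \<alpha> n) (\<lambda>t. real (card (cluster t 1)) ^ 2) = f m"
    unfolding f_def n ccE2 ..
  have X1: "measure_pmf.expectation (mrw p q s n) H = EH m" unfolding EH_def n ..
  have rn: "real n = real (Suc m)" using n by simp
  show ?thesis
    unfolding var unfolding E1 E2 TTE X1 rn
    using main[of m] by (simp only:) (simp add: algebra_simps power2_eq_square)
qed

end
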